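(* Let $\lambda>0$. For every irrational $\alpha$, $\sigma^{\mathcal{H}}\setminus[-\lambda,\lambda]\neq\emptyset$.
   Context: $\mathbb{T}=\mathbb{R}/\mathbb{Z}$. For $\theta\in\mathbb{T}$, $n\in\mathbb{Z}$ put $v(\theta,n)=\cos2\pi((n-1)\alpha+\theta)$ if $n$ is odd and $v(\theta,n)=\cos 2\pi(n\alpha+\theta)$ if $n$ is even; $c(\theta,n)=\lambda$ if $n$ is odd and $c(\theta,n)=\cos2\pi(n\alpha+\theta)$ if $n$ is even. Let $\mathbb{T}_0=\{\theta:\cos 2\pi(n\alpha+\theta)\neq 0\ \forall n\}$ and for $\theta\in\mathbb{T}_0$ let $\mathcal{H}_\theta$ act on $\ell^2(\mathbb{Z})$ by $(\mathcal{H}_\theta u)(n)=c(\theta,n)u(n+1)+c(\theta,n-1)u(n-1)+v(\theta,n)u(n)$; $\sigma^{\mathcal{H}}$ denotes its spectrum, which is independent of $\theta$. *)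

theory Defs
  imports "HOL-Analysis.Analysis"
begin

definition l2Z :: "(int \<Rightarrow> complex) set" where
  "l2Z = {u. (\<lambda>n. (cmod (u n))\<^sup>2) summable_on UNIV}"

text \<open>Potential v(theta,n); theta is a real representative of a point of R/Z.\<close>
definition vpot :: "real \<Rightarrow> real \<Rightarrow> int \<Rightarrow> real" where
  "vpot \<alpha> \<theta> n = (if odd n then cos (2 * pi * (real_of_int (n - 1) * \<alpha> + \<theta>))
                   else cos (2 * pi * (real_of_int n * \<alpha> + \<theta>)))"

definition chop :: "real \<Rightarrow> real \<Rightarrow> real \<Rightarrow> int \<Rightarrow> real" where
  "chop lam \<alpha> \<theta> n = (if odd n then lam else cos (2 * pi * (real_of_int n * \<alpha> + \<theta>)))"

definition T0 :: "real \<Rightarrow> real set" where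
  "T0 \<alpha> = {\<theta>. \<forall>n::int. cos (2 * pi * (real_of_int n * \<alpha> + \<theta>)) \<noteq> 0}"

definition Hop :: "real \<Rightarrow> real \<Rightarrow> real \<Rightarrow> (int \<Rightarrow> complex) \<Rightarrow> (int \<Rightarrow> complex)" where
  "Hop lam \<alpha> \<theta> u = (\<lambda>n. complex_of_real (chop lam \<alpha> \<theta> n) * u (n + 1)
                        + complex_of_real (chop lam \<alpha> \<theta> (n - 1)) * u (n - 1)
                        + complex_of_real (vpot \<alpha> \<theta> n) * u n)"

text \<open>Spectrum of the bounded operator H_theta on l2(Z): E is in the spectrum iff
  H - E is not a bijection of l2(Z) onto itself (bounded inverse is then automatic).\<close>
definition specH :: "real \<Rightarrow> real \<Rightarrow> real \<Rightarrow> complex set" where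
  "specH lam \<alpha> \<theta> = {E. \<not> bij_betw (\<lambda>u. (\<lambda>n. Hop lam \<alpha> \<theta> u n - E * u n)) l2Z l2Z}"

end

theory Submission imports Defs begin

definition Hr :: "(int \<Rightarrow> real) \<Rightarrow> (int \<Rightarrow> real) \<Rightarrow> (int \<Rightarrow> real) \<Rightarrow> int \<Rightarrow> real" where
  "Hr c v x n = c n * x (n+1) + c (n-1) * x (n-1) + v n * x n"

definition qf :: "(int \<Rightarrow> real) \<Rightarrow> (int \<Rightarrow> real) \<Rightarrow> int \<Rightarrow> int \<Rightarrow> (int \<Rightarrow> real) \<Rightarrow> real" where
  "qf c v a b x = (\<Sum>n\<in>{a..b}. Hr c v x n * x n)"

definition bil :: "(int \<Rightarrow> real) \<Rightarrow> (int \<Rightarrow> real) \<Rightarrow> int \<Rightarrow> int \<Rightarrow> (int \<Rightarrow> real) \<Rightarrow> (int \<Rightarrow> real) \<Rightarrow> real" where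
  "bil c v a b x y = (\<Sum>n\<in>{a..b}. Hr c v x n * y n)"

definition nrm :: "int \<Rightarrow> int \<Rightarrow> (int \<Rightarrow> real) \<Rightarrow> real" where
  "nrm a b x = (\<Sum>n\<in>{a..b}. (x n)\<^sup>2)"

definition supp_in :: "int \<Rightarrow> int \<Rightarrow> (int \<Rightarrow> real) \<Rightarrow> bool" where
  "supp_in a b x \<longleftrightarrow> (\<forall>n. n < a \<or> b < n \<longrightarrow> x n = 0)"

lemma sum_shift_int: fixes a b s :: int shows "(\<Sum>n\<in>{a..b}. f (n + s)) = (\<Sum>n\<in>{a+s..b+s}. (f n :: real))"
  by (rule sum.reindex_bij_witness[where i="\<lambda>n. n - s" and j="\<lambda>n. n + s"]) auto

lemma sum_ends:
  fixes a b :: int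
  assumes "f a = 0" "f (b+1) = 0"
  shows "(\<Sum>n\<in>{a+1..b+1}. f n) = (\<Sum>n\<in>{a..b}. (f n :: real))"
proof -
  have "(\<Sum>n\<in>{a+1..b+1}. f n) = (\<Sum>n\<in>{a..b+1}. f n)"
  proof (rule sum.mono_neutral_left)
    show "\<forall>i\<in>{a..b + 1} - {a + 1..b + 1}. f i = 0"
    proof
      fix i assume "i \<in> {a..b + 1} - {a + 1..b + 1}"
      then have "i = a" by auto
      then show "f i = 0" using assms by simp
    qed
  qed auto
  also have "\<dots> = (\<Sum>n\<in>{a..b}. f n)"
  proof (rule sum.mono_neutral_right)
    show "\<forall>i\<in>{a..b + 1} - {a..b}. f i = 0"
    proof
      fix i assume "i \<in> {a..b + 1} - {a..b}"
      then have "i = b + 1" by auto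
      then show "f i = 0" using assms by simp
    qed
  qed auto
  finally show ?thesis .
qed

lemma supp_window:
  assumes "supp_in a b x" "a' \<le> a" "b \<le> b'"
  shows "qf c v a' b' x = qf c v a b x" "nrm a' b' x = nrm a b x"
    "bil c v a' b' y x = bil c v a b y x"
  unfolding qf_def nrm_def bil_def
  by (rule sum.mono_neutral_right; use assms in \<open>auto simp: supp_in_def\<close>)+

lemma nrm_nonneg: "nrm a b x \<ge> 0"
  unfolding nrm_def by (simp add: sum_nonneg)

lemma shift_sq_le:
  assumes "supp_in a b x"
  shows "(\<Sum>n\<in>{a..b}. (x (n+1))\<^sup>2) \<le> nrm a b x" "(\<Sum>n\<in>{a..b}. (x (n-1))\<^sup>2) \<le> nrm a b x"
proof -
  have "(\<Sum>n\<in>{a..b}. (x (n+1))\<^sup>2) = (\<Sum>n\<in>{a+1..b+1}. (x n)\<^sup>2)"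
    using sum_shift_int[where f="\<lambda>n. (x n)\<^sup>2" and a=a and b=b and s=1] by simp
  also have "\<dots> \<le> (\<Sum>n\<in>{a..b+1}. (x n)\<^sup>2)"
    by (rule sum_mono2) auto
  also have "\<dots> = nrm a b x" unfolding nrm_def
    by (rule sum.mono_neutral_right) (use assms in \<open>auto simp: supp_in_def\<close>)
  finally show "(\<Sum>n\<in>{a..b}. (x (n+1))\<^sup>2) \<le> nrm a b x" .
  have "(\<Sum>n\<in>{a..b}. (x (n-1))\<^sup>2) = (\<Sum>n\<in>{a-1..b-1}. (x n)\<^sup>2)"
    using sum_shift_int[where f="\<lambda>n. (x n)\<^sup>2" and a=a and b=b and s="-1"] by simp
  also have "\<dots> \<le> (\<Sum>n\<in>{a-1..b}. (x n)\<^sup>2)"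
    by (rule sum_mono2) auto
  also have "\<dots> = nrm a b x" unfolding nrm_def
    by (rule sum.mono_neutral_right) (use assms in \<open>auto simp: supp_in_def\<close>)
  finally show "(\<Sum>n\<in>{a..b}. (x (n-1))\<^sup>2) \<le> nrm a b x" .
qed

lemma qf_bound:
  assumes "supp_in a b x" "\<And>n. \<bar>c n\<bar> \<le> C" "\<And>n. \<bar>v n\<bar> \<le> C"
  shows "\<bar>qf c v a b x\<bar> \<le> 3 * C * nrm a b x"
proof -
  have C0: "C \<ge> 0" using assms(2)[of 0] by simp
  have t: "\<bar>Hr c v x n * x n\<bar> \<le> C * ((x (n+1))\<^sup>2 / 2 + (x (n-1))\<^sup>2 / 2 + 2 * (x n)\<^sup>2)" for n
  proof -
    have p: "\<bar>y * z\<bar> \<le> y\<^sup>2/2 + z\<^sup>2/2" for y z :: real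
      using sum_squares_bound[of "\<bar>y\<bar>" "\<bar>z\<bar>"] by (simp add: abs_mult)
    have "\<bar>Hr c v x n * x n\<bar> \<le> \<bar>c n\<bar> * \<bar>x (n+1) * x n\<bar> + \<bar>c (n-1)\<bar> * \<bar>x (n-1) * x n\<bar> + \<bar>v n\<bar> * (x n)\<^sup>2"
    proof -
      have e: "Hr c v x n * x n = c n * (x (n+1) * x n) + c (n-1) * (x (n-1) * x n) + v n * (x n)\<^sup>2"
        by (simp add: Hr_def algebra_simps power2_eq_square)
      have "\<bar>c n * (x (n+1) * x n) + c (n-1) * (x (n-1) * x n) + v n * (x n)\<^sup>2\<bar>
          \<le> \<bar>c n * (x (n+1) * x n)\<bar> + \<bar>c (n-1) * (x (n-1) * x n)\<bar> + \<bar>v n * (x n)\<^sup>2\<bar>"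
        by linarith
      then show ?thesis unfolding e by (simp add: abs_mult)
    qed
    also have "\<dots> \<le> C * ((x (n+1))\<^sup>2 / 2 + (x n)\<^sup>2/2) + C * ((x (n-1))\<^sup>2 / 2 + (x n)\<^sup>2/2) + C * (x n)\<^sup>2"
      by (intro add_mono mult_mono assms p) (auto intro: C0)
    finally show ?thesis by (simp add: algebra_simps)
  qed
  have "\<bar>qf c v a b x\<bar> \<le> (\<Sum>n\<in>{a..b}. C * ((x (n+1))\<^sup>2 / 2 + (x (n-1))\<^sup>2 / 2 + 2 * (x n)\<^sup>2))"
    unfolding qf_def by (rule order_trans[OF sum_abs sum_mono]) (rule t)
  also have "\<dots> = C * ((\<Sum>n\<in>{a..b}. (x (n+1))\<^sup>2) / 2 + (\<Sum>n\<in>{a..b}. (x (n-1))\<^sup>2) / 2 + 2 * nrm a b x)"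
    by (simp add: nrm_def sum_distrib_left[symmetric] sum.distrib sum_divide_distrib[symmetric])
  also have "\<dots> \<le> C * (nrm a b x / 2 + nrm a b x / 2 + 2 * nrm a b x)"
    using shift_sq_le[OF assms(1)] C0 by (intro mult_left_mono) auto
  finally show ?thesis by (simp add: algebra_simps)
qed


lemma Hr_lin: "Hr c v (\<lambda>n. x n + t * y n) n = Hr c v x n + t * Hr c v y n"
  by (simp add: Hr_def algebra_simps)

lemma Hr_sym_sum:
  assumes "supp_in a b x" "supp_in a b y"
  shows "(\<Sum>n\<in>{a..b}. Hr c v y n * x n) = (\<Sum>n\<in>{a..b}. Hr c v x n * y n)"
proof -
  have s1: "(\<Sum>n\<in>{a..b}. c n * y (n+1) * x n) = (\<Sum>n\<in>{a..b}. c (n-1) * x (n-1) * y n)"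
  proof -
    define F where "F m = c (m-1) * y m * x (m-1)" for m
    have "(\<Sum>n\<in>{a..b}. c n * y (n+1) * x n) = (\<Sum>n\<in>{a..b}. F (n+1))" by (simp add: F_def)
    also have "\<dots> = (\<Sum>n\<in>{a+1..b+1}. F n)" by (rule sum_shift_int)
    also have "\<dots> = (\<Sum>n\<in>{a..b}. F n)"
      by (rule sum_ends) (use assms in \<open>auto simp: F_def supp_in_def\<close>)
    finally show ?thesis by (simp add: F_def algebra_simps)
  qed
  have s2: "(\<Sum>n\<in>{a..b}. c n * x (n+1) * y n) = (\<Sum>n\<in>{a..b}. c (n-1) * y (n-1) * x n)"
  proof -
    define F where "F m = c (m-1) * x m * y (m-1)" for m
    have "(\<Sum>n\<in>{a..b}. c n * x (n+1) * y n) = (\<Sum>n\<in>{a..b}. F (n+1))" by (simp add: F_def)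
    also have "\<dots> = (\<Sum>n\<in>{a+1..b+1}. F n)" by (rule sum_shift_int)
    also have "\<dots> = (\<Sum>n\<in>{a..b}. F n)"
      by (rule sum_ends) (use assms in \<open>auto simp: F_def supp_in_def\<close>)
    finally show ?thesis by (simp add: F_def algebra_simps)
  qed
  have "(\<Sum>n\<in>{a..b}. Hr c v y n * x n) = (\<Sum>n\<in>{a..b}. c n * y (n+1) * x n) + (\<Sum>n\<in>{a..b}. c (n-1) * y (n-1) * x n) + (\<Sum>n\<in>{a..b}. v n * y n * x n)"
    by (simp add: Hr_def sum.distrib algebra_simps)
  also have "\<dots> = (\<Sum>n\<in>{a..b}. c (n-1) * x (n-1) * y n) + (\<Sum>n\<in>{a..b}. c n * x (n+1) * y n) + (\<Sum>n\<in>{a..b}. v n * x n * y n)"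
    using s1 s2 by (simp add: algebra_simps)
  also have "\<dots> = (\<Sum>n\<in>{a..b}. Hr c v x n * y n)"
    by (simp add: Hr_def sum.distrib algebra_simps)
  finally show ?thesis .
qed

lemma qf_expand:
  assumes "supp_in a b x" "supp_in a b y"
  shows "qf c v a b (\<lambda>n. x n + t * y n) = qf c v a b x + 2 * t * bil c v a b x y + t\<^sup>2 * qf c v a b y"
proof -
  have "qf c v a b (\<lambda>n. x n + t * y n) = (\<Sum>n\<in>{a..b}. Hr c v x n * x n + t * (Hr c v x n * y n) + t * (Hr c v y n * x n) + t\<^sup>2 * (Hr c v y n * y n))"
    unfolding qf_def Hr_lin by (intro sum.cong) (auto simp: algebra_simps power2_eq_square)
  also have "\<dots> = qf c v a b x + t * bil c v a b x y + t * (\<Sum>n\<in>{a..b}. Hr c v y n * x n) + t\<^sup>2 * qf c v a b y"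
    by (simp add: qf_def bil_def sum.distrib sum_distrib_left)
  finally show ?thesis using Hr_sym_sum[OF assms, of c v] by (simp add: bil_def algebra_simps)
qed

lemma qf_scale: "qf c v a b (\<lambda>n. k * x n) = k\<^sup>2 * qf c v a b x"
  unfolding qf_def Hr_def by (simp add: sum_distrib_left algebra_simps power2_eq_square)

lemma nrm_scale: "nrm a b (\<lambda>n. k * x n) = k\<^sup>2 * nrm a b x"
  unfolding nrm_def by (simp add: sum_distrib_left algebra_simps power2_eq_square)

lemma qf_diff_coef: "qf c' v' a b x - qf c v a b x = qf (\<lambda>n. c' n - c n) (\<lambda>n. v' n - v n) a b x"
  unfolding qf_def Hr_def by (simp add: sum_subtractf[symmetric] algebra_simps)

lemma qf_neg_coef: "qf (\<lambda>n. - c n) (\<lambda>n. - v n) a b x = - qf c v a b x"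
  unfolding qf_def Hr_def by (simp add: sum_negf[symmetric] algebra_simps)

lemma qf_shift_v: "qf c (\<lambda>n. v n - M) a b x = qf c v a b x - M * nrm a b x"
  unfolding qf_def Hr_def nrm_def by (simp add: sum_subtractf[symmetric] sum_distrib_left algebra_simps power2_eq_square)

lemma translate:
  fixes s :: int
  shows "qf c v (a+s) (b+s) (\<lambda>n. x (n-s)) = qf (\<lambda>n. c (n+s)) (\<lambda>n. v (n+s)) a b x"
    "nrm (a+s) (b+s) (\<lambda>n. x (n-s)) = nrm a b x"
    "supp_in a b x \<Longrightarrow> supp_in (a+s) (b+s) (\<lambda>n. x (n-s))"
proof -
  show "qf c v (a+s) (b+s) (\<lambda>n. x (n-s)) = qf (\<lambda>n. c (n+s)) (\<lambda>n. v (n+s)) a b x"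
    unfolding qf_def using sum_shift_int[where f="\<lambda>n. Hr c v (\<lambda>n. x (n-s)) n * x (n-s)" and a=a and b=b and s=s]
    by (simp add: Hr_def algebra_simps)
  show "nrm (a+s) (b+s) (\<lambda>n. x (n-s)) = nrm a b x"
    unfolding nrm_def using sum_shift_int[where f="\<lambda>n. (x (n-s))\<^sup>2" and a=a and b=b and s=s]
    by simp
  show "supp_in a b x \<Longrightarrow> supp_in (a+s) (b+s) (\<lambda>n. x (n-s))"
    unfolding supp_in_def by auto
qed

definition Mset :: "(int \<Rightarrow> real) \<Rightarrow> (int \<Rightarrow> real) \<Rightarrow> real set" where
  "Mset c v = {qf c v a b x / nrm a b x | a b x. supp_in a b x \<and> nrm a b x > 0}"

definition Mx :: "(int \<Rightarrow> real) \<Rightarrow> (int \<Rightarrow> real) \<Rightarrow> real" where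
  "Mx c v = Sup (Mset c v)"

lemma Mset_ne: "Mset c v \<noteq> {}"
proof -
  let ?x = "\<lambda>n::int. if n = 0 then 1 else (0::real)"
  have "supp_in 0 0 ?x" "nrm 0 0 ?x = 1" by (auto simp: supp_in_def nrm_def)
  then show ?thesis unfolding Mset_def by force
qed

lemma Mset_bdd:
  assumes "\<And>n. \<bar>c n\<bar> \<le> C" "\<And>n. \<bar>v n\<bar> \<le> C"
  shows "bdd_above (Mset c v)"
proof (rule bdd_aboveI)
  fix r assume "r \<in> Mset c v"
  then obtain a b x where r: "r = qf c v a b x / nrm a b x" "supp_in a b x" "nrm a b x > 0"
    unfolding Mset_def by blast
  have "\<bar>qf c v a b x\<bar> \<le> 3 * C * nrm a b x" by (rule qf_bound[OF r(2)]; rule assms)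
  then have "qf c v a b x \<le> 3 * C * nrm a b x" by linarith
  then show "r \<le> 3 * C" using r by (simp add: divide_le_eq)
qed

lemma qf_le_Mx:
  assumes "\<And>n. \<bar>c n\<bar> \<le> C" "\<And>n. \<bar>v n\<bar> \<le> C" "supp_in a b x"
  shows "qf c v a b x \<le> Mx c v * nrm a b x"
proof (cases "nrm a b x > 0")
  case True
  then have "qf c v a b x / nrm a b x \<in> Mset c v" using assms(3) unfolding Mset_def by blast
  then have "qf c v a b x / nrm a b x \<le> Mx c v"
    unfolding Mx_def by (rule cSup_upper) (rule Mset_bdd[OF assms(1,2)])
  then show ?thesis using True by (simp add: divide_le_eq)
next
  case False
  then have "nrm a b x = 0" using nrm_nonneg[of a b x] by linarith
  then have "\<forall>n\<in>{a..b}. (x n)\<^sup>2 = 0" unfolding nrm_def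
    by (subst (asm) sum_nonneg_eq_0_iff) auto
  then have "qf c v a b x = 0" unfolding qf_def by (intro sum.neutral) auto
  then show ?thesis using \<open>nrm a b x = 0\<close> by simp
qed


definition approx_tr :: "(int \<Rightarrow> real) \<Rightarrow> (int \<Rightarrow> real) \<Rightarrow> bool" where
  "approx_tr c v \<longleftrightarrow> (\<forall>\<delta>>0. \<forall>L::int. \<exists>s\<ge>L. \<forall>n. \<bar>c (n+s) - c n\<bar> \<le> \<delta> \<and> \<bar>v (n+s) - v n\<bar> \<le> \<delta>)"

lemma approx_min:
  assumes C: "\<And>n. \<bar>c n\<bar> \<le> C" "\<And>n. \<bar>v n\<bar> \<le> C" and tr: "approx_tr c v" and e: "\<epsilon> > 0"
  shows "\<exists>a b x. a \<ge> L \<and> supp_in a b x \<and> nrm a b x = 1 \<and> qf c v a b x \<ge> Mx c v - \<epsilon>"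
proof -
  have "Mx c v - \<epsilon>/2 < Sup (Mset c v)" using e unfolding Mx_def by simp
  then obtain r where "r \<in> Mset c v" "Mx c v - \<epsilon>/2 < r"
    using less_cSupE[OF _ Mset_ne] by blast
  then obtain a0 b0 x0 where r: "r = qf c v a0 b0 x0 / nrm a0 b0 x0" "supp_in a0 b0 x0" "nrm a0 b0 x0 > 0"
    unfolding Mset_def by blast
  define k where "k = 1 / sqrt (nrm a0 b0 x0)"
  define x1 where "x1 n = k * x0 n" for n
  have k2: "k\<^sup>2 = 1 / nrm a0 b0 x0" using r(3) by (simp add: k_def power_divide)
  have n1: "nrm a0 b0 x1 = 1" unfolding x1_def nrm_scale k2 using r(3) by simp
  have q1: "qf c v a0 b0 x1 > Mx c v - \<epsilon>/2"
    unfolding x1_def qf_scale k2 using r \<open>Mx c v - \<epsilon>/2 < r\<close> by simp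
  have s1: "supp_in a0 b0 x1" using r(2) by (simp add: supp_in_def x1_def)
  obtain s where s: "s \<ge> L - a0" "\<And>n. \<bar>c (n+s) - c n\<bar> \<le> \<epsilon>/6 \<and> \<bar>v (n+s) - v n\<bar> \<le> \<epsilon>/6"
    using tr e unfolding approx_tr_def by (meson zero_less_divide_iff zero_less_numeral)
  have "\<bar>qf (\<lambda>n. c (n+s) - c n) (\<lambda>n. v (n+s) - v n) a0 b0 x1\<bar> \<le> 3 * (\<epsilon>/6) * nrm a0 b0 x1"
    by (rule qf_bound[OF s1]) (use s(2) in auto)
  then have "\<bar>qf (\<lambda>n. c (n+s)) (\<lambda>n. v (n+s)) a0 b0 x1 - qf c v a0 b0 x1\<bar> \<le> \<epsilon>/2"
    unfolding qf_diff_coef n1 by simp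
  then have "qf c v (a0+s) (b0+s) (\<lambda>n. x1 (n-s)) \<ge> Mx c v - \<epsilon>"
    unfolding translate(1) using q1 by linarith
  moreover have "nrm (a0+s) (b0+s) (\<lambda>n. x1 (n-s)) = 1" using translate(2) n1 by simp
  moreover have "supp_in (a0+s) (b0+s) (\<lambda>n. x1 (n-s))" using translate(3)[OF s1] .
  moreover have "a0 + s \<ge> L" using s(1) by simp
  ultimately show ?thesis by blast
qed


definition pick :: "(int \<Rightarrow> real) \<Rightarrow> (int \<Rightarrow> real) \<Rightarrow> int \<Rightarrow> nat \<Rightarrow> int \<times> int \<times> (int \<Rightarrow> real)" where
  "pick c v L m = (SOME (a, b, x). a \<ge> L \<and> supp_in a b x \<and> nrm a b x = 1 \<and> qf c v a b x \<ge> Mx c v - (1/8)^m)"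

primrec seqw :: "(int \<Rightarrow> real) \<Rightarrow> (int \<Rightarrow> real) \<Rightarrow> nat \<Rightarrow> int \<times> int \<times> (int \<Rightarrow> real)" where
  "seqw c v 0 = pick c v 0 0"
| "seqw c v (Suc m) = pick c v (fst (snd (seqw c v m)) + 2) (Suc m)"

lemma pick_spec:
  assumes C: "\<And>n. \<bar>c n\<bar> \<le> C" "\<And>n. \<bar>v n\<bar> \<le> C" and tr: "approx_tr c v"
  shows "case pick c v L m of (a, b, x) \<Rightarrow> a \<ge> L \<and> supp_in a b x \<and> nrm a b x = 1 \<and> qf c v a b x \<ge> Mx c v - (1/8)^m"
proof -
  have "\<exists>a b x. a \<ge> L \<and> supp_in a b x \<and> nrm a b x = 1 \<and> qf c v a b x \<ge> Mx c v - (1/8)^m"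
    by (rule approx_min[OF C tr]) simp
  then have "\<exists>p. case p of (a, b, x) \<Rightarrow> a \<ge> L \<and> supp_in a b x \<and> nrm a b x = 1 \<and> qf c v a b x \<ge> Mx c v - (1/8)^m"
    by auto
  then show ?thesis unfolding pick_def by (rule someI_ex)
qed

lemma pick_spec':
  assumes C: "\<And>n. \<bar>c n\<bar> \<le> C" "\<And>n. \<bar>v n\<bar> \<le> C" and tr: "approx_tr c v"
  shows "fst (pick c v L m) \<ge> L \<and> supp_in (fst (pick c v L m)) (fst (snd (pick c v L m))) (snd (snd (pick c v L m)))
     \<and> nrm (fst (pick c v L m)) (fst (snd (pick c v L m))) (snd (snd (pick c v L m))) = 1
     \<and> qf c v (fst (pick c v L m)) (fst (snd (pick c v L m))) (snd (snd (pick c v L m))) \<ge> Mx c v - (1/8)^m"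
  using pick_spec[OF C tr, of L m] by (cases "pick c v L m") auto

lemma nrm1_le: "nrm a b x = 1 \<Longrightarrow> a \<le> b"
  unfolding nrm_def by (cases "a \<le> b") auto

lemma geo4: "(\<Sum>k\<le>K. (1/4::real)^k) = 4/3 - (1/3) * (1/4)^K"
proof (induction K)
  case 0 then show ?case by simp
next
  case (Suc K)
  have "(\<Sum>k\<le>Suc K. (1/4::real)^k) = (\<Sum>k\<le>K. (1/4::real)^k) + (1/4)^(Suc K)" by simp
  moreover have "(1/4::real)^(Suc K) = (1/4) * (1/4)^K" by (rule power_Suc)
  ultimately show ?case using Suc.IH by linarith
qed

lemma core:
  fixes c v :: "int \<Rightarrow> real"
  assumes C: "\<And>n. \<bar>c n\<bar> \<le> C" "\<And>n. \<bar>v n\<bar> \<le> C" and tr: "approx_tr c v"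
  shows "\<exists>w\<in>l2Z. \<forall>u\<in>l2Z. \<exists>n. complex_of_real (c n) * u (n+1) + complex_of_real (c (n-1)) * u (n-1)
            + complex_of_real (v n) * u n - complex_of_real (Mx c v) * u n \<noteq> w n"
proof -
  define A where "A m = fst (seqw c v m)" for m
  define B where "B m = fst (snd (seqw c v m))" for m
  define X where "X m = snd (snd (seqw c v m))" for m
  define M where "M = Mx c v"
  have P: "supp_in (A m) (B m) (X m) \<and> nrm (A m) (B m) (X m) = 1 \<and> qf c v (A m) (B m) (X m) \<ge> M - (1/8)^m
      \<and> (case m of 0 \<Rightarrow> A m \<ge> 0 | Suc k \<Rightarrow> A m \<ge> B k + 2)" for m
    unfolding A_def B_def X_def M_def
    by (cases m) (simp_all only: seqw.simps nat.case pick_spec'[OF C tr])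
  have AB: "A m \<le> B m" for m using P[of m] nrm1_le by blast
  have A2: "A m \<ge> 2 * int m" for m
  proof (induction m)
    case 0 then show ?case using P[of 0] by simp
  next
    case (Suc m) then show ?case using P[of "Suc m"] AB[of m] by simp
  qed
  have sep: "B m + 2 \<le> A k" if "m < k" for m k
    using that
  proof (induction k)
    case 0 then show ?case by simp
  next
    case (Suc k)
    show ?case
    proof (cases "m = k")
      case True then show ?thesis using P[of "Suc k"] by simp
    next
      case False
      then have "B m + 2 \<le> A k" using Suc by simp
      then show ?thesis using P[of "Suc k"] AB[of k] by simp
    qed
  qed
  have Xz: "X k n = 0" if "n < A k \<or> B k < n" for k n
    using P[of k] that unfolding supp_in_def by blast
  have sumW: "(\<Sum>k\<le>nat n. h k (X k n)) = h m (X m n)" if "n \<in> {A m..B m}" "\<And>k. h k 0 = 0" for h m n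
  proof -
    have mn: "m \<le> nat n" using that(1) A2[of m] by auto
    have "(\<Sum>k\<le>nat n. h k (X k n)) = h m (X m n) + (\<Sum>k\<in>{..nat n} - {m}. h k (X k n))"
      using mn by (subst sum.remove[of _ m]) auto
    also have "(\<Sum>k\<in>{..nat n} - {m}. h k (X k n)) = 0"
    proof (rule sum.neutral, rule ballI)
      fix k assume "k \<in> {..nat n} - {m}"
      then have "k < m \<or> m < k" by auto
      then have "X k n = 0"
      proof
        assume "k < m" then show ?thesis using sep[of k m] that(1) by (intro Xz) auto
      next
        assume "m < k" then show ?thesis using sep[of m k] that(1) by (intro Xz) auto
      qed
      then show "h k (X k n) = 0" using that(2) by simp
    qed
    finally show ?thesis by simp
  qed
  have sumW0: "(\<Sum>k\<le>nat n. h k (X k n)) = 0" if "\<forall>m. n \<notin> {A m..B m}" "\<And>k. h k 0 = 0" for h n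
  proof (intro sum.neutral ballI)
    fix k assume "k \<in> {..nat n}"
    have "n \<notin> {A k..B k}" using that(1) by blast
    then have "n < A k \<or> B k < n" by auto
    then have "X k n = 0" by (rule Xz)
    then show "h k (X k n) = 0" using that(2) by simp
  qed
  define w where "w n = (\<Sum>k\<le>nat n. (1/2)^k * X k n)" for n
  have w1: "w n = (1/2)^m * X m n" if "n \<in> {A m..B m}" for m n
    unfolding w_def by (rule sumW[OF that]) simp
  have wsq: "(w n)\<^sup>2 = (\<Sum>k\<le>nat n. (1/4)^k * (X k n)\<^sup>2)" for n
  proof (cases "\<exists>m. n \<in> {A m..B m}")
    case True
    then obtain m where m: "n \<in> {A m..B m}" by blast
    have "(\<Sum>k\<le>nat n. (1/4)^k * (X k n)\<^sup>2) = (1/4)^m * (X m n)\<^sup>2"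
      by (rule sumW[OF m]) simp
    moreover have "((2::real)^m)\<^sup>2 = 4^m"
      by (simp add: power2_eq_square power_mult_distrib[symmetric])
    ultimately show ?thesis unfolding w1[OF m]
      by (simp add: power_mult_distrib power_divide)
  next
    case False
    then have "w n = 0" unfolding w_def by (intro sumW0) auto
    moreover have "(\<Sum>k\<le>nat n. (1/4)^k * (X k n)\<^sup>2) = 0"
      by (rule sumW0) (use False in auto)
    ultimately show ?thesis by simp
  qed
  have Xsum: "(\<Sum>n\<in>F. (X k n)\<^sup>2) \<le> 1" if "finite F" for F k
  proof -
    have "(\<Sum>n\<in>F. (X k n)\<^sup>2) \<le> (\<Sum>n\<in>F \<union> {A k..B k}. (X k n)\<^sup>2)"
      by (rule sum_mono2) (use that in auto)
    also have "\<dots> = (\<Sum>n\<in>{A k..B k}. (X k n)\<^sup>2)"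
      by (rule sum.mono_neutral_right) (use that in \<open>auto intro!: Xz\<close>)
    also have "\<dots> = 1" using P[of k] by (simp add: nrm_def)
    finally show ?thesis .
  qed
  have wl2: "(\<lambda>n. complex_of_real (w n)) \<in> l2Z"
    unfolding l2Z_def
  proof (simp, rule nonneg_bdd_above_summable_on)
    show "bdd_above (sum (\<lambda>n. (w n)\<^sup>2) ` {F. F \<subseteq> UNIV \<and> finite F})"
    proof (rule bdd_aboveI, clarsimp)
      fix F :: "int set" assume F: "finite F"
      define K where "K = Max (insert 0 (nat ` F))"
      have Kn: "nat n \<le> K" if "n \<in> F" for n unfolding K_def using F that by auto
      have "(\<Sum>n\<in>F. (w n)\<^sup>2) = (\<Sum>n\<in>F. \<Sum>k\<le>K. (1/4)^k * (X k n)\<^sup>2)"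
      proof (rule sum.cong[OF refl])
        fix n assume n: "n \<in> F"
        show "(w n)\<^sup>2 = (\<Sum>k\<le>K. (1/4)^k * (X k n)\<^sup>2)"
          unfolding wsq
        proof (rule sum.mono_neutral_left)
          show "\<forall>i\<in>{..K} - {..nat n}. (1/4)^i * (X i n)\<^sup>2 = 0"
          proof
            fix i assume "i \<in> {..K} - {..nat n}"
            then have "n < A i" using A2[of i] by auto
            then show "(1/4)^i * (X i n)\<^sup>2 = 0" using Xz by simp
          qed
        qed (use Kn n in auto)
      qed
      also have "\<dots> = (\<Sum>k\<le>K. (1/4)^k * (\<Sum>n\<in>F. (X k n)\<^sup>2))"
        by (subst sum.swap) (simp add: sum_distrib_left)
      also have "\<dots> \<le> (\<Sum>k\<le>K. (1/4)^k * 1)"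
        by (intro sum_mono mult_left_mono Xsum F) auto
      also have "\<dots> \<le> 2" unfolding mult_1_right geo4
        using zero_le_power[of "1/4::real" K] by linarith
      finally show "(\<Sum>n\<in>F. (w n)\<^sup>2) \<le> 2" .
    qed
  qed auto
  show ?thesis
  proof (rule bexI[OF _ wl2], rule ballI, rule ccontr)
    fix u assume u: "u \<in> l2Z"
    assume "\<not> (\<exists>n. complex_of_real (c n) * u (n + 1) + complex_of_real (c (n - 1)) * u (n - 1) +
                 complex_of_real (v n) * u n - complex_of_real (Mx c v) * u n \<noteq> complex_of_real (w n))"
    then have eq: "complex_of_real (c n) * u (n + 1) + complex_of_real (c (n - 1)) * u (n - 1) +
                 complex_of_real (v n) * u n - complex_of_real M * u n = complex_of_real (w n)" for n
      unfolding M_def by blast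
    define r where "r n = Re (u n)" for n
    define v' where "v' n = v n - M" for n
    have req: "Hr c v' r n = w n" for n
      using arg_cong[OF eq[of n], of Re] unfolding Hr_def r_def v'_def by (simp add: algebra_simps)
    define U where "U = infsum (\<lambda>n. (cmod (u n))\<^sup>2) UNIV"
    have rU: "(\<Sum>n\<in>F. (r n)\<^sup>2) \<le> U" if "finite F" for F
    proof -
      have "(\<Sum>n\<in>F. (r n)\<^sup>2) \<le> (\<Sum>n\<in>F. (cmod (u n))\<^sup>2)"
        unfolding r_def by (intro sum_mono) (metis abs_Re_le_cmod abs_ge_zero power2_abs power_mono)
      also have "\<dots> \<le> U" unfolding U_def
        by (rule finite_sum_le_infsum) (use u that in \<open>auto simp: l2Z_def\<close>)
      finally show ?thesis .
    qed
    define C' where "C' = C + \<bar>M\<bar>"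
    have C'c: "\<bar>c n\<bar> \<le> C'" and C'v: "\<bar>v' n\<bar> \<le> C'" for n
      using C[of n] unfolding C'_def v'_def by auto
    define K where "K = 3 * C' * U"
    obtain m where m: "K < 2^m" using real_arch_pow[of 2 K] by auto
    define a where "a = A m"
    define b where "b = B m"
    define x where "x = X m"
    have sx: "supp_in a b x" and nx: "nrm a b x = 1" and qx: "qf c v a b x \<ge> M - (1/8)^m"
      using P[of m] unfolding a_def b_def x_def by auto
    define N where "N = \<bar>a\<bar> + \<bar>b\<bar> + 1"
    define rN where "rN n = (if -N \<le> n \<and> n \<le> N then r n else 0)" for n
    have srN: "supp_in (-N) N rN" unfolding supp_in_def rN_def by auto
    have sxN: "supp_in (-N) N x" using sx unfolding supp_in_def N_def by auto
    define t :: real where "t = 4^m"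
    define y where "y n = rN n + t * x n" for n
    have syN: "supp_in (-N) N y" using srN sxN unfolding supp_in_def y_def by auto
    have pos: "qf c v' (-N) N y \<le> 0"
      using qf_le_Mx[OF C syN] unfolding v'_def qf_shift_v M_def by simp
    have exp: "qf c v' (-N) N y = qf c v' (-N) N rN + 2 * t * bil c v' (-N) N rN x + t\<^sup>2 * qf c v' (-N) N x"
      unfolding y_def by (rule qf_expand[OF srN sxN])
    have q1: "qf c v' (-N) N x \<ge> -((1/8)^m)"
      using qx nx supp_window(1)[OF sx, of "-N" N c v'] unfolding v'_def qf_shift_v N_def by auto
    have q2: "qf c v' (-N) N rN \<ge> - K"
    proof -
      have "\<bar>qf c v' (-N) N rN\<bar> \<le> 3 * C' * nrm (-N) N rN"
        by (rule qf_bound[OF srN]; rule C'c C'v)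
      moreover have "nrm (-N) N rN \<le> U"
        unfolding nrm_def using rU[of "{-N..N}"] by (simp add: rN_def)
      moreover have "C' \<ge> 0" using C'c[of 0] by simp
      ultimately show ?thesis unfolding K_def
        by (smt (verit) mult_left_mono mult_nonneg_nonneg)
    qed
    have q3: "bil c v' (-N) N rN x = (1/2)^m"
    proof -
      have "bil c v' (-N) N rN x = bil c v' a b rN x"
        by (rule supp_window(3)[OF sx]) (auto simp: N_def)
      also have "\<dots> = (\<Sum>n\<in>{a..b}. Hr c v' r n * x n)"
        unfolding bil_def
      proof (rule sum.cong[OF refl])
        fix n assume "n \<in> {a..b}"
        then have "rN (n+1) = r (n+1)" "rN (n-1) = r (n-1)" "rN n = r n"
          unfolding rN_def N_def by auto
        then show "Hr c v' rN n * x n = Hr c v' r n * x n" by (simp add: Hr_def)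
      qed
      also have "\<dots> = (\<Sum>n\<in>{a..b}. (1/2)^m * (x n)\<^sup>2)"
        unfolding req
      proof (rule sum.cong[OF refl])
        fix n assume "n \<in> {a..b}"
        then show "w n * x n = (1/2)^m * (x n)\<^sup>2"
          using w1[of n m] unfolding a_def b_def x_def by (simp add: power2_eq_square)
      qed
      also have "\<dots> = (1/2)^m" using nx by (simp add: nrm_def sum_distrib_left[symmetric])
      finally show ?thesis .
    qed
    have e1: "t * (1/2)^m = 2^m" unfolding t_def by (simp add: power_mult_distrib[symmetric])
    have e2: "t\<^sup>2 * (1/8)^m = 2^m" unfolding t_def
      by (simp add: power_mult_distrib[symmetric] power_mult[symmetric] power2_eq_square)
    have "t\<^sup>2 * qf c v' (-N) N x \<ge> t\<^sup>2 * (-((1/8)^m))"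
      using q1 by (intro mult_left_mono) auto
    then have "0 \<ge> - K + 2 * 2^m - 2^m" using pos exp q2 q3 e1 e2 by (simp add: algebra_simps)
    then show False using m by simp
  qed
qed


lemma cos_lip: fixes a b :: real shows "\<bar>cos a - cos b\<bar> \<le> \<bar>a - b\<bar>"
proof -
  have "\<bar>cos a - cos b\<bar> = 2 * \<bar>sin ((a + b) / 2)\<bar> * \<bar>sin ((b - a) / 2)\<bar>"
    unfolding cos_diff_cos by (simp add: abs_mult)
  also have "\<dots> \<le> 2 * 1 * \<bar>(b - a) / 2\<bar>"
    by (intro mult_mono abs_sin_x_le_abs_x) auto
  finally show ?thesis by simp
qed

lemma cos_shift_int: fixes z :: real and h :: int shows "cos (z + 2 * pi * of_int h) = cos z"
proof -
  have "cos ((2*pi) * of_int h) = 1" "sin ((2*pi) * of_int h) = 0" by (rule cos_int_2pin, rule sin_int_2pin)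
  then show ?thesis by (simp add: cos_add)
qed

lemma cos_close:
  assumes "\<bar>of_int k * (2*\<alpha>) - of_int h\<bar> * (2*pi) \<le> \<delta>"
  shows "\<bar>cos (2*pi*(y + of_int k * (2*\<alpha>))) - cos (2*pi*y)\<bar> \<le> \<delta>"
proof -
  have "2*pi*(y + of_int k * (2*\<alpha>)) = 2*pi*(y + (of_int k * (2*\<alpha>) - of_int h)) + 2*pi* of_int h"
    by (simp add: algebra_simps)
  then have "cos (2*pi*(y + of_int k * (2*\<alpha>))) = cos (2*pi*(y + (of_int k * (2*\<alpha>) - of_int h)))"
    using cos_shift_int by simp
  moreover have "\<bar>cos (2*pi*(y + (of_int k * (2*\<alpha>) - of_int h))) - cos (2*pi*y)\<bar>
      \<le> \<bar>2*pi*(y + (of_int k * (2*\<alpha>) - of_int h)) - 2*pi*y\<bar>" by (rule cos_lip)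
  moreover have "\<bar>2*pi*(y + (of_int k * (2*\<alpha>) - of_int h)) - 2*pi*y\<bar> = \<bar>of_int k * (2*\<alpha>) - of_int h\<bar> * (2*pi)"
  proof -
    have "2*pi*(y + (of_int k * (2*\<alpha>) - of_int h)) - 2*pi*y = (of_int k * (2*\<alpha>) - of_int h) * (2*pi)"
      by (simp add: algebra_simps)
    then show ?thesis by (simp add: abs_mult)
  qed
  ultimately show ?thesis using assms by linarith
qed

lemma tr_concrete:
  assumes "\<alpha> \<notin> \<rat>"
  shows "approx_tr (chop lam \<alpha> \<theta>) (vpot \<alpha> \<theta>)"
  unfolding approx_tr_def
proof (intro allI impI)
  fix \<delta> :: real and L :: int
  assume d: "\<delta> > 0"
  have "2 * \<alpha> \<notin> \<rat>"
  proof
    assume "2 * \<alpha> \<in> \<rat>"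
    then have "(2 * \<alpha>) / 2 \<in> \<rat>" by (intro Rats_divide) auto
    then show False using assms by simp
  qed
  then have "infinite (approx_set (2*\<alpha>))" using rational_iff_finite_approx_set by blast
  then obtain h k where hk: "(h, k) \<in> approx_set (2*\<alpha>)" "k > max L \<lceil>2*pi/\<delta>\<rceil>"
    using infinite_approx_set by blast
  have k0: "k > 0" and ap: "\<bar>2*\<alpha> - of_int h / of_int k\<bar> < 1 / (of_int k)\<^sup>2"
    using hk(1) unfolding approx_set_def by auto
  have "\<bar>of_int k * (2*\<alpha>) - of_int h\<bar> = of_int k * \<bar>2*\<alpha> - of_int h / of_int k\<bar>"
  proof -
    have "of_int k * (2*\<alpha>) - of_int h = of_int k * (2*\<alpha> - of_int h / of_int k)"
      using k0 by (simp add: field_simps)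
    then show ?thesis using k0 by (simp add: abs_mult)
  qed
  also have "\<dots> \<le> of_int k * (1 / (of_int k)\<^sup>2)"
    using ap k0 by (intro mult_left_mono) auto
  also have "\<dots> = 1 / of_int k" using k0 by (simp add: power2_eq_square)
  finally have e1: "\<bar>of_int k * (2*\<alpha>) - of_int h\<bar> \<le> 1 / of_int k" .
  have "real_of_int k > 2*pi/\<delta>" using hk(2) by linarith
  then have "real_of_int k * \<delta> > 2*pi" using d by (simp add: field_simps)
  then have "1 / real_of_int k * (2*pi) \<le> \<delta>" using k0 d by (simp add: field_simps)
  then have cl: "\<bar>of_int k * (2*\<alpha>) - of_int h\<bar> * (2*pi) \<le> \<delta>"
    using e1 by (smt (verit) mult_right_mono pi_gt_zero)
  show "\<exists>s\<ge>L. \<forall>n. \<bar>chop lam \<alpha> \<theta> (n + s) - chop lam \<alpha> \<theta> n\<bar> \<le> \<delta> \<and> \<bar>vpot \<alpha> \<theta> (n + s) - vpot \<alpha> \<theta> n\<bar> \<le> \<delta>"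
  proof (intro exI conjI allI)
    show "2 * k \<ge> L" using hk(2) k0 by linarith
    fix n :: int
    have o: "odd (n + 2*k) = odd n" by simp
    have a1: "real_of_int (n + 2*k) * \<alpha> + \<theta> = (real_of_int n * \<alpha> + \<theta>) + of_int k * (2*\<alpha>)"
      by (simp add: algebra_simps)
    have a2: "real_of_int (n + 2*k - 1) * \<alpha> + \<theta> = (real_of_int (n - 1) * \<alpha> + \<theta>) + of_int k * (2*\<alpha>)"
      by (simp add: algebra_simps)
    show "\<bar>chop lam \<alpha> \<theta> (n + 2*k) - chop lam \<alpha> \<theta> n\<bar> \<le> \<delta>"
    proof (cases "odd n")
      case True then show ?thesis unfolding chop_def o using d by simp
    next
      case False
      then have "chop lam \<alpha> \<theta> (n + 2*k) - chop lam \<alpha> \<theta> n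
          = cos (2*pi*((real_of_int n * \<alpha> + \<theta>) + of_int k * (2*\<alpha>))) - cos (2*pi*(real_of_int n * \<alpha> + \<theta>))"
        unfolding chop_def o a1 by simp
      then show ?thesis using cos_close[OF cl] by presburger
    qed
    show "\<bar>vpot \<alpha> \<theta> (n + 2*k) - vpot \<alpha> \<theta> n\<bar> \<le> \<delta>"
    proof (cases "odd n")
      case True
      then have "vpot \<alpha> \<theta> (n + 2*k) - vpot \<alpha> \<theta> n
          = cos (2*pi*((real_of_int (n - 1) * \<alpha> + \<theta>) + of_int k * (2*\<alpha>))) - cos (2*pi*(real_of_int (n - 1) * \<alpha> + \<theta>))"
        unfolding vpot_def o a2 by simp
      then show ?thesis using cos_close[OF cl] by presburger
    next
      case False
      then have "vpot \<alpha> \<theta> (n + 2*k) - vpot \<alpha> \<theta> n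
          = cos (2*pi*((real_of_int n * \<alpha> + \<theta>) + of_int k * (2*\<alpha>))) - cos (2*pi*(real_of_int n * \<alpha> + \<theta>))"
        unfolding vpot_def o a1 by simp
      then show ?thesis using cos_close[OF cl] by presburger
    qed
  qed
qed

lemma tr_neg: "approx_tr c v \<Longrightarrow> approx_tr (\<lambda>n. - c n) (\<lambda>n. - v n)"
proof -
  have e: "\<bar>- c (n+s) - - c n\<bar> = \<bar>c (n+s) - c n\<bar>" "\<bar>- v (n+s) - - v n\<bar> = \<bar>v (n+s) - v n\<bar>" for n s
    by linarith+
  assume "approx_tr c v"
  then show ?thesis unfolding approx_tr_def e .
qed

lemma bounds_concrete:
  "\<bar>chop lam \<alpha> \<theta> n\<bar> \<le> \<bar>lam\<bar> + 1" "\<bar>vpot \<alpha> \<theta> n\<bar> \<le> \<bar>lam\<bar> + 1"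
  unfolding chop_def vpot_def by (auto simp: abs_cos_le_one intro: add_increasing)


lemma test_vec:
  fixes c v :: "int \<Rightarrow> real" and \<sigma> :: real
  assumes "\<sigma>\<^sup>2 = 1" "\<And>n. \<bar>c n\<bar> \<le> C" "\<And>n. \<bar>v n\<bar> \<le> C"
  shows "\<sigma> * c 1 + (v 1 + v 2) / 2 \<le> Mx c v"
proof -
  define x where "x n = (if n = 1 then 1 else if n = 2 then \<sigma> else 0)" for n :: int
  have s: "supp_in 1 2 x" unfolding supp_in_def x_def by auto
  have I: "{1..2::int} = {1, 2}" by auto
  have n: "nrm 1 2 x = 2" unfolding nrm_def I x_def using assms(1) by simp
  have q: "qf c v 1 2 x = 2 * (\<sigma> * c 1) + v 1 + v 2"
    unfolding qf_def I x_def Hr_def using assms(1) by (simp add: power2_eq_square algebra_simps)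
  have "qf c v 1 2 x \<le> Mx c v * nrm 1 2 x" by (rule qf_le_Mx[OF assms(2,3) s])
  then have "2 * (\<sigma> * c 1) + v 1 + v 2 \<le> Mx c v * 2" unfolding q n .
  then show ?thesis by (simp add: field_simps)
qed

lemma cos_alpha_ne0:
  assumes "\<alpha> \<notin> \<rat>"
  shows "cos (2 * pi * \<alpha>) \<noteq> 0"
proof
  assume "cos (2 * pi * \<alpha>) = 0"
  then obtain i :: int where "2 * pi * \<alpha> = of_int i * (pi/2)" using cos_zero_iff_int by blast
  then have a: "\<alpha> = of_int i / 4" by (simp add: field_simps)
  have r: "of_int i / (4::real) \<in> \<rat>" by (intro Rats_divide) auto
  have "\<alpha> \<in> \<rat>" by (subst a) (rule r)
  then show False using assms by simp
qed

theorem lemma3p3: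
  fixes lam \<alpha> \<theta> :: real
  assumes "lam > 0" and "\<alpha> \<notin> \<rat>" and "\<theta> \<in> T0 \<alpha>"
  shows "\<exists>E \<in> specH lam \<alpha> \<theta>. E \<notin> complex_of_real ` {-lam..lam}"
proof -
  define c where "c = chop lam \<alpha> \<theta>"
  define v where "v = vpot \<alpha> \<theta>"
  define C where "C = \<bar>lam\<bar> + 1"
  have Cc: "\<bar>c n\<bar> \<le> C" and Cv: "\<bar>v n\<bar> \<le> C" for n
    unfolding c_def v_def C_def by (rule bounds_concrete)+
  have Cc': "\<bar>- c n\<bar> \<le> C" and Cv': "\<bar>- v n\<bar> \<le> C" for n using Cc Cv by auto
  have tr: "approx_tr c v" unfolding c_def v_def by (rule tr_concrete[OF assms(2)])
  have tr': "approx_tr (\<lambda>n. - c n) (\<lambda>n. - v n)" by (rule tr_neg[OF tr])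
  have c1: "c 1 = lam" unfolding c_def chop_def by simp
  define S where "S = v 1 + v 2"
  have S: "S = 2 * cos (2 * pi * (real_of_int 1 * \<alpha> + \<theta>)) * cos (2 * pi * \<alpha>)"
  proof -
    have "S = cos (2 * pi * \<theta>) + cos (2 * pi * (2 * \<alpha> + \<theta>))"
      unfolding S_def v_def vpot_def by simp
    also have "\<dots> = 2 * cos ((2 * pi * \<theta> + 2 * pi * (2 * \<alpha> + \<theta>)) / 2) * cos ((2 * pi * \<theta> - 2 * pi * (2 * \<alpha> + \<theta>)) / 2)"
      by (rule cos_plus_cos)
    also have "(2 * pi * \<theta> + 2 * pi * (2 * \<alpha> + \<theta>)) / 2 = 2 * pi * (real_of_int 1 * \<alpha> + \<theta>)"
      by (simp add: algebra_simps)
    also have "(2 * pi * \<theta> - 2 * pi * (2 * \<alpha> + \<theta>)) / 2 = - (2 * pi * \<alpha>)"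
      by (simp add: algebra_simps)
    finally show ?thesis by simp
  qed
  have "cos (2 * pi * (real_of_int 1 * \<alpha> + \<theta>)) \<noteq> 0" using assms(3) unfolding T0_def by blast
  then have S0: "S \<noteq> 0" unfolding S using cos_alpha_ne0[OF assms(2)] by simp
  have notin: "complex_of_real r \<notin> complex_of_real ` {-lam..lam}" if "r > lam \<or> r < -lam" for r
    using that by auto
  have HopE: "Hop lam \<alpha> \<theta> u n = complex_of_real (c n) * u (n+1) + complex_of_real (c (n-1)) * u (n-1)
            + complex_of_real (v n) * u n" for u n
    unfolding Hop_def c_def v_def by simp
  show ?thesis
  proof (cases "S > 0")
    case True
    have M: "lam + S / 2 \<le> Mx c v"
      using test_vec[of 1 c C v, OF _ Cc Cv] c1 unfolding S_def by simp
    obtain w where w: "w \<in> l2Z" "\<forall>u\<in>l2Z. \<exists>n. complex_of_real (c n) * u (n+1) + complex_of_real (c (n-1)) * u (n-1)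
            + complex_of_real (v n) * u n - complex_of_real (Mx c v) * u n \<noteq> w n"
      using core[OF Cc Cv tr] by blast
    have "complex_of_real (Mx c v) \<in> specH lam \<alpha> \<theta>"
      unfolding specH_def
    proof (clarsimp)
      assume "bij_betw (\<lambda>u n. Hop lam \<alpha> \<theta> u n - complex_of_real (Mx c v) * u n) l2Z l2Z"
      then have "w \<in> (\<lambda>u n. Hop lam \<alpha> \<theta> u n - complex_of_real (Mx c v) * u n) ` l2Z"
        using w(1) unfolding bij_betw_def by blast
      then obtain u where "u \<in> l2Z" "w = (\<lambda>n. Hop lam \<alpha> \<theta> u n - complex_of_real (Mx c v) * u n)" by blast
      then show False using w(2) unfolding HopE by auto
    qed
    moreover have "Mx c v > lam" using M True by linarith
    ultimately show ?thesis using notin by blast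
  next
    case False
    then have Sn: "S < 0" using S0 by linarith
    have M: "lam - S / 2 \<le> Mx (\<lambda>n. - c n) (\<lambda>n. - v n)"
      using test_vec[of "-1" "\<lambda>n. - c n" C "\<lambda>n. - v n", OF _ Cc' Cv'] c1 unfolding S_def by (simp add: field_simps)
    define M2 where "M2 = Mx (\<lambda>n. - c n) (\<lambda>n. - v n)"
    obtain w where w: "w \<in> l2Z" "\<forall>u\<in>l2Z. \<exists>n. complex_of_real (- c n) * u (n+1) + complex_of_real (- c (n-1)) * u (n-1)
            + complex_of_real (- v n) * u n - complex_of_real M2 * u n \<noteq> w n"
      using core[OF Cc' Cv' tr'] unfolding M2_def by blast
    have mw: "(\<lambda>n. - w n) \<in> l2Z" using w(1) unfolding l2Z_def by simp
    have "complex_of_real (- M2) \<in> specH lam \<alpha> \<theta>"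
      unfolding specH_def
    proof (clarsimp)
      assume "bij_betw (\<lambda>u n. Hop lam \<alpha> \<theta> u n + complex_of_real M2 * u n) l2Z l2Z"
      then have "(\<lambda>n. - w n) \<in> (\<lambda>u n. Hop lam \<alpha> \<theta> u n + complex_of_real M2 * u n) ` l2Z"
        using mw unfolding bij_betw_def by blast
      then obtain u where u: "u \<in> l2Z" "(\<lambda>n. - w n) = (\<lambda>n. Hop lam \<alpha> \<theta> u n + complex_of_real M2 * u n)" by blast
      have "complex_of_real (- c n) * u (n+1) + complex_of_real (- c (n-1)) * u (n-1)
            + complex_of_real (- v n) * u n - complex_of_real M2 * u n = w n" for n
      proof -
        have "- w n = Hop lam \<alpha> \<theta> u n + complex_of_real M2 * u n" using fun_cong[OF u(2), of n] by simp
        then have "w n = - (Hop lam \<alpha> \<theta> u n + complex_of_real M2 * u n)" by (metis minus_minus)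
        have "complex_of_real (- c n) * u (n+1) + complex_of_real (- c (n-1)) * u (n-1)
            + complex_of_real (- v n) * u n - complex_of_real M2 * u n = - (Hop lam \<alpha> \<theta> u n + complex_of_real M2 * u n)"
          unfolding HopE by (simp add: algebra_simps)
        then show ?thesis using \<open>w n = _\<close> by simp
      qed
      then show False using w(2) u(1) by blast
    qed
    moreover have "- M2 < - lam" using M Sn unfolding M2_def by linarith
    ultimately show ?thesis using notin[of "- M2"] by auto
  qed
qed

end
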